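(* Consider $n$ scalar states $x_i(t)\in\mathbb{R}$, $t\in\mathbb{Z}_{\ge0}$, updated synchronously by $$x_i(t+1)=x_i(t)+\frac{1}{1+n_i}\sum_{j\in\mathcal{N}_i}\big(x_j(t-T_{ji})-x_i(t)\big),\qquad i=1,\dots,n,$$ where the neighbor sets $\mathcal{N}_i$ are fixed, the neighbor relation is symmetric ($j\in\mathcal{N}_i\iff i\in\mathcal{N}_j$), the resulting undirected graph is connected, $n_i=|\mathcal{N}_i|\ge1$, and the delays $T_{ji}\in\mathbb{Z}_{\ge0}$ are constant (possibly different for different links and for the two directions of a link), with arbitrary initial values $x_i(s)$ for $s\le 0$. Then, regardless of the values of the delays, $x_i(t)-x_j(t)\to0$ as $t\to\infty$ for all $i,j$. *)

theory Defs
  imports "HOL-Analysis.Analysis"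
begin

end

theory Submission
  imports Defs
begin

definition alp :: "nat \<Rightarrow> real" where "alp n = 1 / (real n + 1)"

definition Kc :: "nat \<Rightarrow> (nat \<Rightarrow> nat set) \<Rightarrow> nat" where
  "Kc n N = Max ((\<lambda>(i,j). LEAST k. ((\<lambda>a b. b \<in> N a) ^^ k) i j) ` ({..<n} \<times> {..<n}))"

definition Lc :: "nat \<Rightarrow> (nat \<Rightarrow> nat set) \<Rightarrow> nat \<Rightarrow> nat" where
  "Lc n N B = Kc n N * (B + 1) + B"

lemma Kc_path:
  assumes conn: "\<And>i j. i < n \<Longrightarrow> j < n \<Longrightarrow> (\<lambda>a b. b \<in> N a)\<^sup>*\<^sup>* i j"
    and "i < n" "j < n"
  shows "\<exists>k \<le> Kc n N. ((\<lambda>a b. b \<in> N a) ^^ k) i j"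
proof -
  let ?R = "\<lambda>a b. b \<in> N a"
  obtain k0 where "(?R ^^ k0) i j" using rtranclp_imp_relpowp[OF conn[OF assms(2,3)]] by blast
  hence P: "(?R ^^ (LEAST k. (?R ^^ k) i j)) i j" by (rule LeastI)
  have "(LEAST k. (?R ^^ k) i j) \<le> Kc n N"
    unfolding Kc_def
    by (rule Max_ge) (use assms(2,3) in force)+
  with P show ?thesis by blast
qed

locale cons =
  fixes n :: nat and N :: "nat \<Rightarrow> nat set" and T :: "nat \<Rightarrow> nat \<Rightarrow> nat"
    and B :: nat and x :: "nat \<Rightarrow> int \<Rightarrow> real"
  assumes N_range: "\<And>i. i < n \<Longrightarrow> N i \<subseteq> {..<n}"
    and N_sym: "\<And>i j. i < n \<Longrightarrow> j < n \<Longrightarrow> (j \<in> N i \<longleftrightarrow> i \<in> N j)"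
    and N_conn: "\<And>i j. i < n \<Longrightarrow> j < n \<Longrightarrow> (\<lambda>a b. b \<in> N a)\<^sup>*\<^sup>* i j"
    and T_le: "\<And>i j. i < n \<Longrightarrow> j \<in> N i \<Longrightarrow> T j i \<le> B"
    and update: "\<And>i t. i < n \<Longrightarrow>
        x i (int t + 1) = x i (int t) +
          (1 / (1 + real (card (N i)))) *
            (\<Sum>j\<in>N i. x j (int t - int (T j i)) - x i (int t))"
begin

definition ub :: "real \<Rightarrow> nat \<Rightarrow> bool" where
  "ub U t \<longleftrightarrow> (\<forall>i<n. \<forall>s. int t - int B \<le> s \<longrightarrow> s \<le> int t \<longrightarrow> x i s \<le> U)"

lemma fin: "i < n \<Longrightarrow> finite (N i)"
  using N_range finite_subset by blast

lemma gap_eq: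
  assumes "i < n"
  shows "U - x i (int t + 1) = (1 / (1 + real (card (N i)))) *
     ((U - x i t) + (\<Sum>j\<in>N i. U - x j (int t - int (T j i))))"
proof -
  define c where "c = real (card (N i))"
  define S where "S = (\<Sum>j\<in>N i. x j (int t - int (T j i)))"
  have e1: "(\<Sum>j\<in>N i. x j (int t - int (T j i)) - x i (int t)) = S - c * x i t"
    unfolding S_def c_def by (simp add: sum_subtractf)
  have e2: "(\<Sum>j\<in>N i. U - x j (int t - int (T j i))) = c * U - S"
    unfolding S_def c_def by (simp add: sum_subtractf)
  have "c \<ge> 0" unfolding c_def by simp
  show ?thesis unfolding update[OF assms] e1 e2 c_def[symmetric]
    using \<open>c \<ge> 0\<close> by (simp add: field_simps)
qed

lemma gap_ge:
  assumes u: "ub U t" and i: "i < n"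
  shows "U - x i (int t + 1) \<ge> alp n * (U - x i t)"
    and "\<And>j. j \<in> N i \<Longrightarrow> U - x i (int t + 1) \<ge> alp n * (U - x j (int t - int (T j i)))"
proof -
  define a where "a = 1 / (1 + real (card (N i)))"
  have cn: "card (N i) \<le> n" using card_mono[OF _ N_range[OF i]] by simp
  have a: "alp n \<le> a" "0 \<le> alp n" unfolding a_def alp_def using cn
    by (auto simp: field_simps)
  have g0: "U - x i t \<ge> 0" using u i unfolding ub_def by auto
  have gj: "U - x j (int t - int (T j i)) \<ge> 0" if "j \<in> N i" for j
  proof -
    have "j < n" using N_range[OF i] that by auto
    moreover have "T j i \<le> B" using T_le[OF i that] .
    ultimately show ?thesis using u unfolding ub_def by auto
  qed
  have S0: "(\<Sum>j\<in>N i. U - x j (int t - int (T j i))) \<ge> 0" using gj by (simp add: sum_nonneg)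
  have eq: "U - x i (int t + 1) = a * ((U - x i t) + (\<Sum>j\<in>N i. U - x j (int t - int (T j i))))"
    unfolding a_def by (rule gap_eq[OF i])
  have "alp n * (U - x i t) \<le> a * (U - x i t)" using a g0 by (simp add: mult_right_mono)
  also have "\<dots> \<le> a * ((U - x i t) + (\<Sum>j\<in>N i. U - x j (int t - int (T j i))))"
    using S0 a by (intro mult_left_mono) auto
  finally show "U - x i (int t + 1) \<ge> alp n * (U - x i t)" using eq by simp
  fix j assume j: "j \<in> N i"
  have "(\<Sum>j\<in>N i. U - x j (int t - int (T j i))) \<ge> U - x j (int t - int (T j i))"
    using member_le_sum[OF j, of "\<lambda>j. U - x j (int t - int (T j i))"] gj fin[OF i] by auto
  hence "alp n * (U - x j (int t - int (T j i))) \<le> a * ((U - x i t) + (\<Sum>j\<in>N i. U - x j (int t - int (T j i))))"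
    using a g0 gj[OF j] by (meson add_increasing mult_mono order_trans)
  then show "U - x i (int t + 1) \<ge> alp n * (U - x j (int t - int (T j i)))" using eq by simp
qed

lemma ub_step: assumes "ub U t" shows "ub U (Suc t)"
  unfolding ub_def
proof (intro allI impI)
  fix i s assume i: "i < n" and s: "int (Suc t) - int B \<le> s" "s \<le> int (Suc t)"
  show "x i s \<le> U"
  proof (cases "s = int t + 1")
    case True
    have "U - x i t \<ge> 0" using assms i unfolding ub_def by auto
    moreover have "alp n \<ge> 0" by (simp add: alp_def)
    ultimately have "U - x i (int t + 1) \<ge> 0"
      using gap_ge(1)[OF assms i] by (meson mult_nonneg_nonneg order_trans)
    thus ?thesis using True by simp
  next
    case False
    thus ?thesis using assms i s unfolding ub_def by auto
  qed
qed

lemma ub_mono: "ub U t \<Longrightarrow> t \<le> t' \<Longrightarrow> ub U t'"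
  by (induction t') (auto intro: ub_step simp: le_Suc_eq)

lemma stay:
  assumes u: "ub U t0" and i: "i < n" and g: "U - x i (int (t0 + r)) \<ge> alp n ^ r * d"
  shows "U - x i (int (t0 + r + k)) \<ge> alp n ^ (r + k) * d"
proof (induction k)
  case 0 then show ?case using g by simp
next
  case (Suc k)
  have u': "ub U (t0 + r + k)" using ub_mono[OF u] by simp
  have "alp n ^ (r + Suc k) * d = alp n * (alp n ^ (r + k) * d)" by simp
  also have "\<dots> \<le> alp n * (U - x i (int (t0 + r + k)))"
    using Suc by (intro mult_left_mono) (auto simp: alp_def)
  also have "\<dots> \<le> U - x i (int (t0 + r + k) + 1)" using gap_ge(1)[OF u' i] .
  finally show ?case by (simp add: ac_simps)
qed

lemma nbr:
  assumes u: "ub U t0" and i: "i < n" and j: "j \<in> N i" and d: "d \<ge> 0"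
    and g: "U - x j (int (t0 + r)) \<ge> alp n ^ r * d"
  shows "U - x i (int (t0 + r + T j i + 1)) \<ge> alp n ^ (r + T j i + 1) * d"
proof -
  have u': "ub U (t0 + r + T j i)" using ub_mono[OF u] by simp
  have a: "0 \<le> alp n" "alp n \<le> 1" by (auto simp: alp_def)
  have "alp n ^ (r + T j i + 1) * d \<le> alp n ^ (r + 1) * d"
    using a d by (intro mult_right_mono power_decreasing) auto
  also have "\<dots> = alp n * (alp n ^ r * d)" by simp
  also have "\<dots> \<le> alp n * (U - x j (int (t0 + r)))"
    using g a by (intro mult_left_mono) auto
  also have "\<dots> = alp n * (U - x j (int (t0 + r + T j i) - int (T j i)))" by simp
  also have "\<dots> \<le> U - x i (int (t0 + r + T j i) + 1)" using gap_ge(2)[OF u' i j] .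
  finally show ?thesis by (simp add: ac_simps)
qed

lemma path:
  assumes u: "ub U t0" and i0: "i0 < n" and g: "U - x i0 (int t0) \<ge> d" and d: "d \<ge> 0"
  shows "((\<lambda>a b. b \<in> N a) ^^ k) i0 c \<Longrightarrow> c < n \<and> U - x c (int (t0 + k * (B + 1))) \<ge> alp n ^ (k * (B + 1)) * d"
proof (induction k arbitrary: c)
  case 0
  then show ?case using i0 g by simp
next
  case (Suc k)
  from Suc.prems obtain b where b: "((\<lambda>a b. b \<in> N a) ^^ k) i0 b" "c \<in> N b"
    by (rule relpowp_Suc_E)
  from Suc.IH[OF b(1)] have bn: "b < n" and gb: "U - x b (int (t0 + k * (B + 1))) \<ge> alp n ^ (k * (B + 1)) * d"
    by auto
  have cn: "c < n" using N_range[OF bn] b(2) by auto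
  have bc: "b \<in> N c" using N_sym[OF bn cn] b(2) by simp
  have TB: "T b c \<le> B" using T_le[OF cn bc] .
  have 1: "U - x c (int (t0 + k * (B + 1) + T b c + 1)) \<ge> alp n ^ (k * (B + 1) + T b c + 1) * d"
    using nbr[OF u cn bc d gb] .
  have 2: "U - x c (int (t0 + (k * (B + 1) + T b c + 1) + (B - T b c))) \<ge> alp n ^ ((k * (B + 1) + T b c + 1) + (B - T b c)) * d"
    by (rule stay[OF u cn]) (use 1 in \<open>simp add: add.assoc\<close>)
  have e: "k * (B + 1) + T b c + 1 + (B - T b c) = Suc k * (B + 1)" using TB by simp
  have e2: "t0 + (k * (B + 1) + T b c + 1) + (B - T b c) = t0 + Suc k * (B + 1)" using TB by simp
  show ?case using cn 2 unfolding e e2 by simp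
qed

lemma contract:
  assumes u: "ub U t0" and i0: "i0 < n" and g: "U - x i0 (int t0) \<ge> d" and d: "d \<ge> 0"
  shows "ub (U - alp n ^ Lc n N B * d) (t0 + Lc n N B)"
  unfolding ub_def
proof (intro allI impI)
  fix i s assume i: "i < n" and s: "int (t0 + Lc n N B) - int B \<le> s" "s \<le> int (t0 + Lc n N B)"
  define K where "K = Kc n N"
  define r where "r = nat (s - int (t0 + K * (B + 1)))"
  have rB: "r \<le> B" and sr: "s = int (t0 + K * (B + 1) + r)"
    using s unfolding r_def K_def Lc_def by auto
  obtain k where k: "k \<le> K" "((\<lambda>a b. b \<in> N a) ^^ k) i0 i"
    using Kc_path[OF N_conn i0 i] unfolding K_def by blast
  have g1: "U - x i (int (t0 + k * (B + 1))) \<ge> alp n ^ (k * (B + 1)) * d"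
    using path[OF u i0 g d k(2)] by simp
  have le: "k * (B + 1) \<le> K * (B + 1)" using k(1) by (rule mult_le_mono1)
  have g2: "U - x i (int (t0 + k * (B + 1) + (K * (B + 1) - k * (B + 1) + r))) \<ge> alp n ^ (k * (B + 1) + (K * (B + 1) - k * (B + 1) + r)) * d"
    by (rule stay[OF u i g1])
  have e: "k * (B + 1) + (K * (B + 1) - k * (B + 1) + r) = K * (B + 1) + r" using le by simp
  have e3: "t0 + k * (B + 1) + (K * (B + 1) - k * (B + 1) + r) = t0 + K * (B + 1) + r" using le by simp
  have g3: "U - x i s \<ge> alp n ^ (K * (B + 1) + r) * d"
    using g2 unfolding e e3 sr .
  have a: "0 \<le> alp n" "alp n \<le> 1" by (auto simp: alp_def)
  have "alp n ^ Lc n N B * d \<le> alp n ^ (K * (B + 1) + r) * d"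
    using a d rB unfolding Lc_def K_def by (intro mult_right_mono power_decreasing) auto
  with g3 show "x i s \<le> U - alp n ^ Lc n N B * d" by simp
qed

end


theorem theorem5:
  fixes n :: nat
    and N :: "nat \<Rightarrow> nat set"
    and T :: "nat \<Rightarrow> nat \<Rightarrow> nat"
    and x :: "nat \<Rightarrow> int \<Rightarrow> real"
  assumes N_range: "\<And>i. i < n \<Longrightarrow> N i \<subseteq> {..<n}"
    and N_irrefl: "\<And>i. i < n \<Longrightarrow> i \<notin> N i"
    and N_sym: "\<And>i j. i < n \<Longrightarrow> j < n \<Longrightarrow> (j \<in> N i \<longleftrightarrow> i \<in> N j)"
    and N_conn: "\<And>i j. i < n \<Longrightarrow> j < n \<Longrightarrow> (\<lambda>a b. b \<in> N a)\<^sup>*\<^sup>* i j"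
    and N_card: "\<And>i. i < n \<Longrightarrow> card (N i) \<ge> 1"
    and update: "\<And>i t. i < n \<Longrightarrow>
        x i (int t + 1) = x i (int t) +
          (1 / (1 + real (card (N i)))) *
            (\<Sum>j\<in>N i. x j (int t - int (T j i)) - x i (int t))"
  shows "\<And>i j. i < n \<Longrightarrow> j < n \<Longrightarrow>
           (\<lambda>t::nat. x i (int t) - x j (int t)) \<longlonglongrightarrow> 0"
proof -
  fix i j assume i: "i < n" and j: "j < n"
  define B where "B = (\<Sum>i<n. \<Sum>j<n. T j i)"
  have T_le: "T j i \<le> B" if "i < n" "j \<in> N i" for i j
  proof -
    have jn: "j < n" using N_range[OF that(1)] that(2) by auto
    have "T j i \<le> (\<Sum>j<n. T j i)" using member_le_sum[of j "{..<n}" "\<lambda>j. T j i"] jn by simp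
    also have "\<dots> \<le> B" unfolding B_def using member_le_sum[of i "{..<n}" "\<lambda>i. \<Sum>j<n. T j i"] that(1) by simp
    finally show ?thesis .
  qed
  interpret A: cons n N T B x
    by unfold_locales (use N_range N_sym N_conn T_le update in auto)
  have upd': "- x i (int t + 1) = - x i (int t) +
          (1 / (1 + real (card (N i)))) *
            (\<Sum>j\<in>N i. - x j (int t - int (T j i)) - - x i (int t))" if "i < n" for i t
  proof -
    have "(\<Sum>j\<in>N i. - x j (int t - int (T j i)) - - x i (int t)) = - (\<Sum>j\<in>N i. x j (int t - int (T j i)) - x i (int t))"
      by (simp add: sum_negf[symmetric])
    then show ?thesis using update[OF that] by simp
  qed
  interpret C: cons n N T B "\<lambda>i s. - x i s"
    by unfold_locales (use N_range N_sym N_conn T_le upd' in auto)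
  define L where "L = Lc n N B"
  define c where "c = alp n ^ L / 2"
  have a: "0 < alp n" "alp n \<le> 1" by (auto simp: alp_def)
  have c: "0 < c" "c \<le> 1/2" unfolding c_def using a by (auto simp: power_le_one)
  define U0 where "U0 = (\<Sum>i<n. \<Sum>s\<in>{- int B..0}. \<bar>x i s\<bar>)"
  have U0: "\<bar>x i s\<bar> \<le> U0" if "i < n" "- int B \<le> s" "s \<le> 0" for i s
  proof -
    have "\<bar>x i s\<bar> \<le> (\<Sum>s\<in>{- int B..0}. \<bar>x i s\<bar>)"
      using member_le_sum[of s "{- int B..0}" "\<lambda>s. \<bar>x i s\<bar>"] that by simp
    also have "\<dots> \<le> U0" unfolding U0_def
      using member_le_sum[of i "{..<n}" "\<lambda>i. \<Sum>s\<in>{- int B..0}. \<bar>x i s\<bar>"] that(1)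
      by (simp add: sum_nonneg)
    finally show ?thesis .
  qed
  have key: "\<exists>U W. A.ub U (k * L) \<and> C.ub W (k * L) \<and> U + W \<le> (1 - c) ^ k * (2 * U0)" for k
  proof (induction k)
    case 0
    have "A.ub U0 0" unfolding A.ub_def using U0 by force
    moreover have "C.ub U0 0" unfolding C.ub_def using U0 by force
    ultimately show ?case by (intro exI[of _ U0]) simp
  next
    case (Suc k)
    then obtain U W where u: "A.ub U (k * L)" and w: "C.ub W (k * L)" and uw: "U + W \<le> (1 - c) ^ k * (2 * U0)"
      by blast
    define t0 where "t0 = k * L"
    have n0: "0 < n" using i by simp
    have x1: "x 0 (int t0) \<le> U" using u n0 unfolding A.ub_def t0_def by auto
    have x2: "- x 0 (int t0) \<le> W" using w n0 unfolding C.ub_def t0_def by auto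
    define d where "d = (U + W) / 2"
    have d: "d \<ge> 0" using x1 x2 unfolding d_def by simp
    have e: "Suc k * L = t0 + L" unfolding t0_def by simp
    have cc: "0 \<le> 1 - c" using c by simp
    have fin: "U + W - alp n ^ L * d \<le> (1 - c) ^ Suc k * (2 * U0)"
    proof -
      have "U + W - alp n ^ L * d = (1 - c) * (U + W)" unfolding c_def d_def by (simp add: field_simps)
      also have "\<dots> \<le> (1 - c) * ((1 - c) ^ k * (2 * U0))" using uw cc by (rule mult_left_mono)
      finally show ?thesis by simp
    qed
    show ?case
    proof (cases "x 0 (int t0) \<le> (U - W) / 2")
      case True
      have g: "U - x 0 (int t0) \<ge> d" using True unfolding d_def by simp
      have "A.ub (U - alp n ^ L * d) (Suc k * L)"
        by (subst e, unfold L_def, rule A.contract[OF u[folded t0_def] n0 g d])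
      moreover have "C.ub W (Suc k * L)" using C.ub_mono[OF w] unfolding e t0_def by simp
      ultimately show ?thesis using fin by (intro exI[of _ "U - alp n ^ L * d"] exI[of _ W]) simp
    next
      case False
      have g: "W - (- x 0 (int t0)) \<ge> d" using False unfolding d_def by simp
      have "C.ub (W - alp n ^ L * d) (Suc k * L)"
        by (subst e, unfold L_def, rule C.contract[OF w[folded t0_def] n0 g d])
      moreover have "A.ub U (Suc k * L)" using A.ub_mono[OF u] unfolding e t0_def by simp
      ultimately show ?thesis using fin by (intro exI[of _ U] exI[of _ "W - alp n ^ L * d"]) simp
    qed
  qed
  have lim: "(\<lambda>k. (1 - c) ^ k * (2 * U0)) \<longlonglongrightarrow> 0"
    by (rule tendsto_mult_left_zero, rule LIMSEQ_power_zero) (use c in auto)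
  show "(\<lambda>t::nat. x i (int t) - x j (int t)) \<longlonglongrightarrow> 0"
  proof (rule LIMSEQ_I)
    fix r :: real assume r: "0 < r"
    obtain k0 where k0: "\<forall>k\<ge>k0. norm ((1 - c) ^ k * (2 * U0) - 0) < r"
      using LIMSEQ_D[OF lim r] by blast
    obtain U W where u: "A.ub U (k0 * L)" and w: "C.ub W (k0 * L)" and uw: "U + W \<le> (1 - c) ^ k0 * (2 * U0)"
      using key by blast
    have "norm (x i (int t) - x j (int t) - 0) < r" if t: "t \<ge> k0 * L" for t
    proof -
      have u': "A.ub U t" and w': "C.ub W t" using A.ub_mono[OF u t] C.ub_mono[OF w t] by auto
      have "x i t \<le> U" "x j t \<le> U" using u' i j unfolding A.ub_def by auto
      moreover have "- x i t \<le> W" "- x j t \<le> W" using w' i j unfolding C.ub_def by auto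
      ultimately have "\<bar>x i t - x j t\<bar> \<le> U + W" by linarith
      also have "\<dots> < r" using uw k0 by fastforce
      finally show ?thesis by simp
    qed
    then show "\<exists>no. \<forall>t\<ge>no. norm (x i (int t) - x j (int t) - 0) < r" by blast
  qed
qed

end
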